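(* Let $\mathbf P$ be the edge-probability matrix of a directed stochastic block model with $K_n$ communities, community-probability vector $\boldsymbol\rho$ with $\rho_{\min}=\min_k\rho_k>0$, block matrix $\mathbf B$ with pairwise distinct rows, and sparsity factor $\gamma_n$. Let $E_{\min}=n\rho_{\min}/2$ and $L_n=2\exp\big\{-\frac{\frac12(\frac{\rho_{\min}}2)^2n}{1+\frac13(\frac{\rho_{\min}}2)}\big\}$. Then $$\mathbb P\left(d_{\mathbf P}^*>\gamma_n\sqrt{E_{\min}}\,d_{\mathbf B}^*\right)\ge1-\binom{K_n}{2}K_nL_n.$$ Moreover, if $\frac{n\rho_{\min}^2}{8(1+\frac16\rho_{\min})}-\log\big(K_n^2(K_n-1)\big)\to\infty$ as $n\to\infty$, then this lower bound converges to $1$.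
   Context: Model: nodes $[n]$; labels $Z_1,\dots,Z_n$ i.i.d. Categorical$(\boldsymbol\rho)$ on $[K_n]$, $\pi(i)=Z_i$; $\mathbf B\in[0,1]^{K_n\times K_n}$; $\gamma_n\in(0,1]$; $P_{ij}=\gamma_nB_{\pi(i)\pi(j)}$ for all $i,j\in[n]$ (including $i=j$). $d_{\mathbf B}^*=\min_{a\ne b}\|\mathbf B_{a\cdot}-\mathbf B_{b\cdot}\|_2$ and $d_{\mathbf P}^*=\min\{\|\mathbf P_{i\cdot}-\mathbf P_{j\cdot}\|_2: i,j\in[n],\ \pi(i)\ne\pi(j)\}$. $\boldsymbol\rho$, $K_n$, $\mathbf B$, $\gamma_n$ may depend on $n$. *)

theory Defs
  imports "HOL-Probability.Probability"
begin

text \<open>Communities are indexed by {..<K} (0-based), nodes by {..<n}.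
  A block matrix B is a function nat => nat => real (only entries with indices < K matter).\<close>

definition rho_min :: "nat \<Rightarrow> nat pmf \<Rightarrow> real" where
  "rho_min K rho = Min ((\<lambda>k. pmf rho k) ` {..<K})"

definition B_rowdist :: "nat \<Rightarrow> (nat \<Rightarrow> nat \<Rightarrow> real) \<Rightarrow> nat \<Rightarrow> nat \<Rightarrow> real" where
  "B_rowdist K B a b = sqrt (\<Sum>c<K. (B a c - B b c)^2)"

definition dB_star :: "nat \<Rightarrow> (nat \<Rightarrow> nat \<Rightarrow> real) \<Rightarrow> real" where
  "dB_star K B = Min {B_rowdist K B a b | a b. a < K \<and> b < K \<and> a \<noteq> b}"

definition Pmat :: "real \<Rightarrow> (nat \<Rightarrow> nat \<Rightarrow> real) \<Rightarrow> (nat \<Rightarrow> nat) \<Rightarrow> nat \<Rightarrow> nat \<Rightarrow> real" where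
  "Pmat \<gamma> B \<pi> i j = \<gamma> * B (\<pi> i) (\<pi> j)"

definition P_rowdist :: "nat \<Rightarrow> real \<Rightarrow> (nat \<Rightarrow> nat \<Rightarrow> real) \<Rightarrow> (nat \<Rightarrow> nat) \<Rightarrow> nat \<Rightarrow> nat \<Rightarrow> real" where
  "P_rowdist n \<gamma> B \<pi> i j = sqrt (\<Sum>l<n. (Pmat \<gamma> B \<pi> i l - Pmat \<gamma> B \<pi> j l)^2)"

text \<open>d_P^*: minimum over pairs of nodes in different communities; as an infimum in
  the extended reals, so it is +infinity if all nodes lie in the same community.\<close>
definition dP_star :: "nat \<Rightarrow> real \<Rightarrow> (nat \<Rightarrow> nat \<Rightarrow> real) \<Rightarrow> (nat \<Rightarrow> nat) \<Rightarrow> ereal" where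
  "dP_star n \<gamma> B \<pi> = Inf {ereal (P_rowdist n \<gamma> B \<pi> i j) | i j. i < n \<and> j < n \<and> \<pi> i \<noteq> \<pi> j}"

definition E_min :: "nat \<Rightarrow> real \<Rightarrow> real" where
  "E_min n rmin = real n * rmin / 2"

definition L_n :: "nat \<Rightarrow> real \<Rightarrow> real" where
  "L_n n rmin = 2 * exp (- ((1/2) * (rmin/2)^2 * real n / (1 + (1/3) * (rmin/2))))"

text \<open>Labels Z_1..Z_n i.i.d. Categorical(rho): product pmf on label vectors (default 0 outside [n]).\<close>
definition label_dist :: "nat \<Rightarrow> nat pmf \<Rightarrow> (nat \<Rightarrow> nat) pmf" where
  "label_dist n rho = Pi_pmf {..<n} 0 (\<lambda>_. rho)"

end

theory Submission
  imports Defs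
begin

lemma map_eq_bernoulli:
  fixes rho :: "nat pmf"
  shows "map_pmf (\<lambda>x. x = c) rho = bernoulli_pmf (pmf rho c)"
proof (rule pmf_eqI)
  fix b :: bool
  show "pmf (map_pmf (\<lambda>x. x = c) rho) b = pmf (bernoulli_pmf (pmf rho c)) b"
  proof (cases b)
    case True
    have "(\<lambda>x. x = c) -` {True} = {c}" by auto
    then show ?thesis using True by (simp add: pmf_map measure_pmf_single pmf_le_1)
  next
    case False
    have "(\<lambda>x. x = c) -` {False} = UNIV - {c}" by auto
    then show ?thesis using False measure_pmf.finite_measure_compl[of "{c}" rho]
      by (simp add: pmf_map measure_pmf_single pmf_le_1)
  qed
qed

lemma count_binomial:
  fixes rho :: "nat pmf"
  shows "map_pmf (\<lambda>\<pi>. card {i\<in>{..<n}. \<pi> i = c}) (Pi_pmf {..<n} 0 (\<lambda>_. rho))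
         = binomial_pmf n (pmf rho c)"
proof -
  have "binomial_pmf n (pmf rho c) = map_pmf (\<lambda>f. card {x\<in>{..<n}. f x})
          (Pi_pmf {..<n} (0 = c) (\<lambda>_. bernoulli_pmf (pmf rho c)))"
    by (rule binomial_pmf_altdef') (auto simp: pmf_le_1)
  also have "Pi_pmf {..<n} (0 = c) (\<lambda>_. bernoulli_pmf (pmf rho c))
      = Pi_pmf {..<n} (0 = c) (\<lambda>_. map_pmf (\<lambda>x. x = c) rho)"
    by (simp add: map_eq_bernoulli)
  also have "\<dots> = map_pmf (\<lambda>h. (\<lambda>x. x = c) \<circ> h) (Pi_pmf {..<n} 0 (\<lambda>_. rho))"
    by (rule Pi_pmf_map) auto
  finally show ?thesis by (simp add: pmf.map_comp o_def)
qed

lemma bad_prob: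
  fixes rho :: "nat pmf"
  assumes "0 \<le> r" "r \<le> pmf rho c"
  shows "measure_pmf.prob (Pi_pmf {..<n} 0 (\<lambda>_. rho))
           {\<pi>. real (card {i\<in>{..<n}. \<pi> i = c}) \<le> real n * r / 2}
         \<le> exp (- (real n * r^2 / 2))"
proof (cases "n = 0")
  case True
  then show ?thesis by simp
next
  case False
  define p where "p = pmf rho c"
  have p01: "p \<in> {0..1}" by (auto simp: p_def pmf_le_1)
  have "measure_pmf.prob (Pi_pmf {..<n} 0 (\<lambda>_. rho))
           {\<pi>. real (card {i\<in>{..<n}. \<pi> i = c}) \<le> real n * r / 2}
      = measure_pmf.prob (binomial_pmf n p) {x. real x \<le> real n * r / 2}"
    by (simp add: p_def count_binomial[symmetric] measure_map_pmf vimage_def)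
  also have "\<dots> \<le> measure_pmf.prob (binomial_pmf n p) {x. real x \<le> real n * p - real n * p / 2}"
  proof (rule measure_pmf.finite_measure_mono)
    show "{x. real x \<le> real n * r / 2} \<subseteq> {x. real x \<le> real n * p - real n * p / 2}"
    proof -
      have "real n * r \<le> real n * p" using assms by (intro mult_left_mono) (auto simp: p_def)
      then show ?thesis by (auto simp: mult.commute)
    qed
  qed auto
  also have "\<dots> \<le> exp (- 2 * (real n * p / 2)^2 / real n)"
    by (rule binomial_distribution.prob_le) (use p01 False in \<open>auto simp: binomial_distribution_def\<close>)
  also have "\<dots> = exp (- (real n * p^2 / 2))"
    using False by (simp add: power2_eq_square field_simps)
  also have "\<dots> \<le> exp (- (real n * r^2 / 2))"
    using assms by (auto simp: p_def intro!: mult_left_mono power_mono)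
  finally show ?thesis .
qed


lemma choose2_real: "real (k choose 2) * 2 = real k * (real k - 1)"
proof (cases k)
  case 0
  then show ?thesis by simp
next
  case (Suc m)
  have "Suc m * (m choose 1) = (Suc m choose Suc 1) * Suc 1" by (rule Suc_times_binomial_eq)
  then have "Suc m * m = (Suc m choose 2) * 2" by (simp add: numeral_2_eq_2)
  then have "real (Suc m) * real m = real (Suc m choose 2) * 2" by (metis of_nat_mult of_nat_numeral)
  then show ?thesis using Suc by simp
qed

lemma sum_by_count:
  fixes f :: "nat \<Rightarrow> real" and \<pi> :: "nat \<Rightarrow> nat"
  assumes "\<forall>l<n. \<pi> l < K"
  shows "(\<Sum>l<n. f (\<pi> l)) = (\<Sum>c<K. real (card {i\<in>{..<n}. \<pi> i = c}) * f c)"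
proof -
  have "(\<Sum>c<K. real (card {i\<in>{..<n}. \<pi> i = c}) * f c)
      = (\<Sum>c<K. \<Sum>l<n. (if \<pi> l = c then f c else 0))"
  proof (rule sum.cong[OF refl])
    fix c
    have "real (card {i\<in>{..<n}. \<pi> i = c}) = (\<Sum>i\<in>{i\<in>{..<n}. \<pi> i = c}. 1)" by simp
    also have "\<dots> = (\<Sum>l<n. if \<pi> l = c then 1 else 0)"
      using sum.inter_filter[of "{..<n}" "\<lambda>_. (1::real)" "\<lambda>l. \<pi> l = c"] by simp
    finally show "real (card {i\<in>{..<n}. \<pi> i = c}) * f c = (\<Sum>l<n. (if \<pi> l = c then f c else 0))"
      by (auto simp: sum_distrib_right intro!: sum.cong)
  qed
  also have "\<dots> = (\<Sum>l<n. \<Sum>c<K. (if \<pi> l = c then f c else 0))" by (rule sum.swap)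
  also have "\<dots> = (\<Sum>l<n. f (\<pi> l))" using assms by (intro sum.cong refl) simp
  finally show ?thesis by simp
qed

lemma dB_le:
  assumes "a < K" "b < K" "a \<noteq> b"
  shows "dB_star K B \<le> B_rowdist K B a b"
proof -
  have fin: "finite {B_rowdist K B a b | a b. a < K \<and> b < K \<and> a \<noteq> b}"
    by (rule finite_subset[of _ "(\<lambda>(a,b). B_rowdist K B a b) ` ({..<K} \<times> {..<K})"]) auto
  show ?thesis unfolding dB_star_def by (rule Min_le[OF fin]) (use assms in blast)
qed

lemma good_implies:
  fixes B :: "nat \<Rightarrow> nat \<Rightarrow> real"
  assumes piK: "\<forall>l<n. \<pi> l < K"
    and cnt: "\<forall>c<K. real (card {i\<in>{..<n}. \<pi> i = c}) > E"
    and E0: "E \<ge> 0" and g0: "0 < g"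
    and dist: "\<And>a b. a < K \<Longrightarrow> b < K \<Longrightarrow> a \<noteq> b \<Longrightarrow> (\<exists>c < K. B a c \<noteq> B b c)"
  shows "dP_star n g B \<pi> > ereal (g * sqrt E * dB_star K B)"
proof -
  define S where "S = {ereal (P_rowdist n g B \<pi> i j) | i j. i < n \<and> j < n \<and> \<pi> i \<noteq> \<pi> j}"
  have elem: "ereal (g * sqrt E * dB_star K B) < ereal (P_rowdist n g B \<pi> i j)"
    if ij: "i < n" "j < n" "\<pi> i \<noteq> \<pi> j" for i j
  proof -
    define a where "a = \<pi> i"
    define b where "b = \<pi> j"
    have aK: "a < K" and bK: "b < K" and ab: "a \<noteq> b" using piK ij by (auto simp: a_def b_def)
    define f where "f c = (B a c - B b c)^2" for c
    define cn where "cn c = real (card {i\<in>{..<n}. \<pi> i = c})" for c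
    have "(\<Sum>l<n. (Pmat g B \<pi> i l - Pmat g B \<pi> j l)^2) = (\<Sum>l<n. g^2 * f (\<pi> l))"
      by (intro sum.cong refl) (simp add: Pmat_def f_def a_def b_def power_mult_distrib[symmetric] right_diff_distrib)
    also have "\<dots> = g^2 * (\<Sum>l<n. f (\<pi> l))" by (simp add: sum_distrib_left)
    also have "\<dots> = g^2 * (\<Sum>c<K. cn c * f c)" using sum_by_count[OF piK, of f] by (simp add: cn_def)
    finally have rw: "P_rowdist n g B \<pi> i j = sqrt (g^2 * (\<Sum>c<K. cn c * f c))"
      by (simp add: P_rowdist_def)
    obtain c0 where c0: "c0 < K" "B a c0 \<noteq> B b c0" using dist[OF aK bK ab] by blast
    have fpos: "f c0 > 0" using c0 by (simp add: f_def)
    have "(\<Sum>c<K. E * f c) < (\<Sum>c<K. cn c * f c)"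
    proof (rule sum_strict_mono_ex1)
      show "\<forall>x\<in>{..<K}. E * f x \<le> cn x * f x"
      proof
        fix x assume "x \<in> {..<K}"
        then have "E \<le> cn x" using cnt by (auto simp: cn_def intro: less_imp_le)
        then show "E * f x \<le> cn x * f x" by (rule mult_right_mono) (simp add: f_def)
      qed
      have "E < cn c0" using cnt c0 by (simp add: cn_def)
      then have "E * f c0 < cn c0 * f c0" by (rule mult_strict_right_mono[OF _ fpos])
      then show "\<exists>a\<in>{..<K}. E * f a < cn a * f a" using c0 by blast
    qed simp
    then have lt: "E * B_rowdist K B a b ^ 2 < (\<Sum>c<K. cn c * f c)"
      by (simp add: B_rowdist_def f_def sum_distrib_left sum_nonneg)
    have "g * sqrt E * dB_star K B \<le> g * sqrt E * B_rowdist K B a b"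
      using dB_le[OF aK bK ab, of B] g0 E0 by (intro mult_left_mono) auto
    also have "\<dots> = sqrt (g^2 * (E * B_rowdist K B a b ^ 2))"
      using g0 E0 by (simp add: real_sqrt_mult B_rowdist_def sum_nonneg)
    also have "\<dots> < sqrt (g^2 * (\<Sum>c<K. cn c * f c))"
      using lt g0 by simp
    finally show ?thesis using rw by simp
  qed
  show ?thesis
  proof (cases "S = {}")
    case True
    then show ?thesis by (simp add: dP_star_def S_def[symmetric] top_ereal_def)
  next
    case False
    have fin: "finite S"
      by (rule finite_subset[of _ "(\<lambda>(i,j). ereal (P_rowdist n g B \<pi> i j)) ` ({..<n} \<times> {..<n})"])
         (auto simp: S_def)
    have "dP_star n g B \<pi> = Min S" unfolding dP_star_def S_def[symmetric]
      by (rule cInf_eq_Min[OF fin False])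
    moreover have "ereal (g * sqrt E * dB_star K B) < Min S"
      using fin False elem by (auto simp: Min_gr_iff S_def)
    ultimately show ?thesis by simp
  qed
qed


lemma prob_part:
  fixes k n :: nat and rh :: "nat pmf" and Bn :: "nat \<Rightarrow> nat \<Rightarrow> real" and g :: real
  assumes k2: "k \<ge> 2"
    and supp: "set_pmf rh \<subseteq> {..<k}"
    and rpos: "rho_min k rh > 0"
    and dist: "\<And>a b. a < k \<Longrightarrow> b < k \<Longrightarrow> a \<noteq> b \<Longrightarrow> (\<exists>c < k. Bn a c \<noteq> Bn b c)"
    and g0: "0 < g"
  shows "measure_pmf.prob (label_dist n rh)
              {\<pi>. dP_star n g Bn \<pi> > ereal (g * sqrt (E_min n (rho_min k rh)) * dB_star k Bn)}
            \<ge> 1 - real (k choose 2) * real k * L_n n (rho_min k rh)"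
proof -
  define r where "r = rho_min k rh"
  define p where "p = label_dist n rh"
  define good where "good = {\<pi>. dP_star n g Bn \<pi> > ereal (g * sqrt (E_min n r) * dB_star k Bn)}"
  define bad :: "nat \<Rightarrow> (nat \<Rightarrow> nat) set" where "bad c = {\<pi>. real (card {i\<in>{..<n}. \<pi> i = c}) \<le> real n * r / 2}" for c
  have r0: "r > 0" using rpos by (simp add: r_def)
  have rle: "r \<le> pmf rh c" if "c < k" for c
    unfolding r_def rho_min_def by (rule Min_le) (use that in auto)
  have sub: "(UNIV - good) \<inter> set_pmf p \<subseteq> (\<Union>c\<in>{..<k}. bad c)"
  proof
    fix \<pi> assume A: "\<pi> \<in> (UNIV - good) \<inter> set_pmf p"
    have piK: "\<forall>l<n. \<pi> l < k"
      using A supp by (auto simp: p_def label_dist_def set_Pi_pmf PiE_dflt_def)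
    show "\<pi> \<in> (\<Union>c\<in>{..<k}. bad c)"
    proof (rule ccontr)
      assume "\<pi> \<notin> (\<Union>c\<in>{..<k}. bad c)"
      then have cnt: "\<forall>c<k. real (card {i\<in>{..<n}. \<pi> i = c}) > E_min n r"
        by (auto simp: bad_def E_min_def not_le)
      have "dP_star n g Bn \<pi> > ereal (g * sqrt (E_min n r) * dB_star k Bn)"
        by (rule good_implies[OF piK cnt _ g0 dist]) (use r0 in \<open>auto simp: E_min_def\<close>)
      then show False using A by (auto simp: good_def)
    qed
  qed
  have "measure_pmf.prob p (UNIV - good) = measure_pmf.prob p ((UNIV - good) \<inter> set_pmf p)"
    by (simp add: measure_Int_set_pmf)
  also have "\<dots> \<le> measure_pmf.prob p (\<Union>c\<in>{..<k}. bad c)"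
    by (rule measure_pmf.finite_measure_mono[OF sub]) simp
  also have "\<dots> \<le> (\<Sum>c<k. measure_pmf.prob p (bad c))"
    by (rule measure_pmf.finite_measure_subadditive_finite) auto
  also have "\<dots> \<le> (\<Sum>c<k. exp (- (real n * r^2 / 2)))"
  proof (rule sum_mono)
    fix c assume "c \<in> {..<k}"
    then show "measure_pmf.prob p (bad c) \<le> exp (- (real n * r^2 / 2))"
      unfolding p_def label_dist_def bad_def using r0 rle by (intro bad_prob) auto
  qed
  also have "\<dots> = real k * exp (- (real n * r^2 / 2))" by simp
  also have "\<dots> \<le> real (k choose 2) * real k * L_n n r"
  proof -
    have c1: "real (k choose 2) \<ge> 1"
    proof -
      have "real k * (real k - 1) \<ge> 2 * 1" using k2
        by (intro mult_mono) auto
      then show ?thesis using choose2_real[of k] by linarith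
    qed
    have ex: "(1/2) * (r/2)^2 * real n / (1 + (1/3) * (r/2)) \<le> real n * r^2 / 2"
    proof -
      have nn: "0 \<le> r * (r * real n)" using r0 by (intro mult_nonneg_nonneg) auto
      have "(1/2) * (r/2)^2 * real n / (1 + (1/3) * (r/2)) \<le> (1/2) * (r/2)^2 * real n"
        using r0 divide_left_mono[of 1 "1 + (1/3) * (r/2)" "(1/2) * (r/2)^2 * real n"] using nn by auto
      also have "\<dots> \<le> real n * r^2 / 2" using nn by (simp add: power2_eq_square)
      finally show ?thesis .
    qed
    have "exp (- (real n * r^2 / 2)) \<le> 1 * exp (- ((1/2) * (r/2)^2 * real n / (1 + (1/3) * (r/2))))"
      using ex by simp
    also have "\<dots> \<le> (real (k choose 2) * 2) * exp (- ((1/2) * (r/2)^2 * real n / (1 + (1/3) * (r/2))))"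
      using c1 by (intro mult_right_mono) auto
    finally have "exp (- (real n * r^2 / 2)) \<le> real (k choose 2) * L_n n r"
      by (simp add: L_n_def mult.assoc)
    then show ?thesis
      by (simp add: mult.commute mult.left_commute mult_left_mono)
  qed
  finally have "measure_pmf.prob p (UNIV - good) \<le> real (k choose 2) * real k * L_n n r" .
  moreover have "measure_pmf.prob p (UNIV - good) = 1 - measure_pmf.prob p good"
    using measure_pmf.prob_compl[of good p] by simp
  ultimately show ?thesis by (simp add: good_def p_def r_def)
qed


lemma bound_eq_exp:
  fixes k n :: nat and r :: real
  assumes "k \<ge> 2" "r \<ge> 0"
  shows "real (k choose 2) * real k * L_n n r
       = exp (- (real n * r^2 / (8 * (1 + (1/6) * r)) - ln (real k^2 * (real k - 1))))"
proof -
  have pos: "real k^2 * (real k - 1) > 0" using assms by auto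
  have h: "(1/2) * (r/2)^2 * real n / (1 + (1/3) * (r/2)) = real n * r^2 / (8 * (1 + (1/6) * r))"
    using assms(2) by (simp add: power2_eq_square field_simps)
  have "real (k choose 2) * real k * L_n n r
      = (real (k choose 2) * 2) * real k * exp (- (real n * r^2 / (8 * (1 + (1/6) * r))))"
  proof -
    have "L_n n r = 2 * exp (- (real n * r^2 / (8 * (1 + (1/6) * r))))"
      unfolding L_n_def h ..
    then show ?thesis by simp
  qed
  also have "\<dots> = (real k^2 * (real k - 1)) * exp (- (real n * r^2 / (8 * (1 + (1/6) * r))))"
    by (simp add: choose2_real power2_eq_square)
  also have "\<dots> = exp (ln (real k^2 * (real k - 1))) * exp (- (real n * r^2 / (8 * (1 + (1/6) * r))))"
    using pos by simp
  also have "\<dots> = exp (- (real n * r^2 / (8 * (1 + (1/6) * r)) - ln (real k^2 * (real k - 1))))"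
    by (simp add: exp_add[symmetric])
  finally show ?thesis .
qed

theorem lemma8:
  fixes K :: "nat \<Rightarrow> nat"
    and rho :: "nat \<Rightarrow> nat pmf"
    and B :: "nat \<Rightarrow> nat \<Rightarrow> nat \<Rightarrow> real"
    and \<gamma> :: "nat \<Rightarrow> real"
  assumes K_ge2: "\<And>n. K n \<ge> 2"
    and rho_supp: "\<And>n. set_pmf (rho n) \<subseteq> {..<K n}"
    and rho_min_pos: "\<And>n. rho_min (K n) (rho n) > 0"
    and B_range: "\<And>n a b. a < K n \<Longrightarrow> b < K n \<Longrightarrow> 0 \<le> B n a b \<and> B n a b \<le> 1"
    and B_rows_distinct: "\<And>n a b. a < K n \<Longrightarrow> b < K n \<Longrightarrow> a \<noteq> b \<Longrightarrow> (\<exists>c < K n. B n a c \<noteq> B n b c)"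
    and \<gamma>_range: "\<And>n. 0 < \<gamma> n \<and> \<gamma> n \<le> 1"
  shows "(\<forall>n. measure_pmf.prob (label_dist n (rho n))
              {\<pi>. dP_star n (\<gamma> n) (B n) \<pi>
                   > ereal (\<gamma> n * sqrt (E_min n (rho_min (K n) (rho n))) * dB_star (K n) (B n))}
            \<ge> 1 - real (K n choose 2) * real (K n) * L_n n (rho_min (K n) (rho n)))
       \<and> (filterlim (\<lambda>n. real n * (rho_min (K n) (rho n))^2 / (8 * (1 + (1/6) * rho_min (K n) (rho n)))
                        - ln (real (K n)^2 * (real (K n) - 1))) at_top sequentially
          \<longrightarrow> (\<lambda>n. 1 - real (K n choose 2) * real (K n) * L_n n (rho_min (K n) (rho n))) \<longlonglongrightarrow> 1)"
proof (intro conjI allI impI)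
  fix n
  show "measure_pmf.prob (label_dist n (rho n))
              {\<pi>. dP_star n (\<gamma> n) (B n) \<pi>
                   > ereal (\<gamma> n * sqrt (E_min n (rho_min (K n) (rho n))) * dB_star (K n) (B n))}
            \<ge> 1 - real (K n choose 2) * real (K n) * L_n n (rho_min (K n) (rho n))"
    by (rule prob_part[OF K_ge2 rho_supp rho_min_pos B_rows_distinct]) (use \<gamma>_range in auto)
next
  define f where "f = (\<lambda>n. real n * (rho_min (K n) (rho n))^2 / (8 * (1 + (1/6) * rho_min (K n) (rho n)))
                        - ln (real (K n)^2 * (real (K n) - 1)))"
  assume "filterlim (\<lambda>n. real n * (rho_min (K n) (rho n))^2 / (8 * (1 + (1/6) * rho_min (K n) (rho n)))
                        - ln (real (K n)^2 * (real (K n) - 1))) at_top sequentially"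
  then have lim: "filterlim f at_top sequentially" unfolding f_def .
  have "filterlim (\<lambda>n. - f n) at_bot sequentially"
    using lim by (simp add: filterlim_uminus_at_top)
  then have "(\<lambda>n. exp (- f n)) \<longlonglongrightarrow> 0"
    by (rule filterlim_compose[OF exp_at_bot])
  then have "(\<lambda>n. 1 - exp (- f n)) \<longlonglongrightarrow> 1 - 0"
    by (intro tendsto_diff tendsto_const)
  moreover have "\<And>n. real (K n choose 2) * real (K n) * L_n n (rho_min (K n) (rho n)) = exp (- f n)"
    unfolding f_def using rho_min_pos by (subst bound_eq_exp[OF K_ge2]) (auto simp: algebra_simps less_imp_le)
  ultimately show "(\<lambda>n. 1 - real (K n choose 2) * real (K n) * L_n n (rho_min (K n) (rho n))) \<longlonglongrightarrow> 1"
    by simp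
qed

end
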